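(* Let $n$ be a positive integer. For any even integer $k$ with $\frac{n+1}{2}\le k\le n$, \[\lambda_{\min}(H_{n,k})=\frac{n-2k}{k}\binom{n-1}{k-1}\quad\text{and}\quad\chi_v(H_{n,k})=\frac{2k}{2k-n}.\] Furthermore, for any even integer $k$ with $n/2+1\le k\le n-1$, the map $x\mapsto p_x\in\mathbb{R}^n$ with $p_x(i)=(-1)^{x_i}/\sqrt{n}$ for $i\in[n]$ is a canonical vector coloring of $H_{n,k}$.
   Context: $H_{n,k}$ is the graph on the even-weight elements of $\mathbb{Z}_2^n$ with $x\sim y$ iff $x$ and $y$ differ in exactly $k$ coordinates; $\lambda_{\min}$ denotes the least eigenvalue of the adjacency matrix. A vector $t$-coloring ($t\ge2$) assigns unit vectors to vertices with $\langle p_i,p_j\rangle\le-1/(t-1)$ on edges, and $\chi_v$ is the least such $t$. For a graph on $N$ vertices whose least adjacency eigenvalue has multiplicity $d$, a canonical vector coloring is obtained by taking an $N\times d$ matrix $Q$ whose columns form an orthonormal basis of the least eigenspace and assigning to vertex $i$ the vector $\sqrt{N/d}$ times the $i$-th row of $Q$ (all choices of basis yield the same Gram matrix). *)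

theory Defs
  imports Complex_Main
begin

text \<open>Vertices of H_{n,k}: even-weight elements of Z_2^n, represented by their
support x \<subseteq> {0..<n} (so x_i = 1 iff i \<in> x).\<close>
definition Hverts :: "nat \<Rightarrow> nat set set" where
  "Hverts n = {x. x \<subseteq> {..<n} \<and> even (card x)}"

definition Hadj :: "nat \<Rightarrow> nat \<Rightarrow> nat set \<Rightarrow> nat set \<Rightarrow> bool" where
  "Hadj n k x y \<longleftrightarrow> card ((x - y) \<union> (y - x)) = k"

definition Hadj_mat :: "nat \<Rightarrow> nat \<Rightarrow> nat set \<Rightarrow> nat set \<Rightarrow> real" where
  "Hadj_mat n k x y = (if Hadj n k x y then 1 else 0)"

definition is_eigenvector :: "'v set \<Rightarrow> ('v \<Rightarrow> 'v \<Rightarrow> real) \<Rightarrow> real \<Rightarrow> ('v \<Rightarrow> real) \<Rightarrow> bool" where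
  "is_eigenvector V A l f \<longleftrightarrow> (\<exists>x\<in>V. f x \<noteq> 0) \<and> (\<forall>x\<in>V. (\<Sum>y\<in>V. A x y * f y) = l * f x)"

definition is_eigenvalue :: "'v set \<Rightarrow> ('v \<Rightarrow> 'v \<Rightarrow> real) \<Rightarrow> real \<Rightarrow> bool" where
  "is_eigenvalue V A l \<longleftrightarrow> (\<exists>f. is_eigenvector V A l f)"

definition lambda_min :: "'v set \<Rightarrow> ('v \<Rightarrow> 'v \<Rightarrow> real) \<Rightarrow> real" where
  "lambda_min V A = Min {l. is_eigenvalue V A l}"

definition vector_coloring :: "'v set \<Rightarrow> ('v \<Rightarrow> 'v \<Rightarrow> bool) \<Rightarrow> real \<Rightarrow> nat \<Rightarrow> ('v \<Rightarrow> nat \<Rightarrow> real) \<Rightarrow> bool" where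
  "vector_coloring V E t m p \<longleftrightarrow> t \<ge> 2 \<and>
     (\<forall>x\<in>V. (\<Sum>i<m. (p x i)\<^sup>2) = 1) \<and>
     (\<forall>x\<in>V. \<forall>y\<in>V. E x y \<longrightarrow> (\<Sum>i<m. p x i * p y i) \<le> - 1 / (t - 1))"

definition chi_v :: "'v set \<Rightarrow> ('v \<Rightarrow> 'v \<Rightarrow> bool) \<Rightarrow> real" where
  "chi_v V E = Inf {t. \<exists>m p. vector_coloring V E t m p}"

text \<open>p (vectors in R^m) is a canonical vector coloring: there is a V x m matrix Q
(columns q 0, ..., q (m-1)) whose columns form an orthonormal basis of the least
eigenspace of A, with p x = sqrt(|V|/m) * (row x of Q).\<close>
definition canonical_vector_coloring :: "'v set \<Rightarrow> ('v \<Rightarrow> 'v \<Rightarrow> real) \<Rightarrow> nat \<Rightarrow> ('v \<Rightarrow> nat \<Rightarrow> real) \<Rightarrow> bool" where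
  "canonical_vector_coloring V A m p \<longleftrightarrow>
     (\<exists>q :: nat \<Rightarrow> 'v \<Rightarrow> real.
        (\<forall>i<m. is_eigenvector V A (lambda_min V A) (q i)) \<and>
        (\<forall>i<m. \<forall>j<m. (\<Sum>x\<in>V. q i x * q j x) = (if i = j then 1 else 0)) \<and>
        (\<forall>f. is_eigenvector V A (lambda_min V A) f \<longrightarrow>
             (\<exists>c. \<forall>x\<in>V. f x = (\<Sum>i<m. c i * q i x))) \<and>
        (\<forall>x\<in>V. \<forall>i<m. p x i = sqrt (real (card V) / real m) * q i x))"

end

theory Submission
  imports Defs
begin


definition sd :: "nat set \<Rightarrow> nat set \<Rightarrow> nat set" where
  "sd x y = (x - y) \<union> (y - x)"

definition chi :: "nat set \<Rightarrow> nat set \<Rightarrow> real" where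
  "chi S x = (-1) ^ card (S \<inter> x)"

definition Kr :: "nat set \<Rightarrow> nat \<Rightarrow> nat set \<Rightarrow> real" where
  "Kr N k S = (\<Sum>T\<in>{T. T \<subseteq> N \<and> card T = k}. chi T S)"

fun K :: "nat \<Rightarrow> nat \<Rightarrow> nat \<Rightarrow> int" where
  "K 0 k s = (if k = 0 then 1 else 0)"
| "K (Suc m) k s = (if s = 0 then K m k 0 + (if k = 0 then 0 else K m (k-1) 0)
      else K m k (s-1) - (if k = 0 then 0 else K m (k-1) (s-1)))"

lemma chi_insert:
  assumes "finite T" "a \<notin> T"
  shows "chi (insert a T) S = (if a \<in> S then -1 else 1) * chi T S"
proof -
  have "card (insert a T \<inter> S) = (if a \<in> S then Suc (card (T \<inter> S)) else card (T \<inter> S))"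
    using assms by (auto simp: Int_insert_left)
  then show ?thesis unfolding chi_def by auto
qed

lemma subsets_split:
  assumes "finite N" "a \<in> N"
  shows "{T. T \<subseteq> N \<and> card T = k} = {T. T \<subseteq> N - {a} \<and> card T = k} \<union>
     (if k = 0 then {} else insert a ` {T. T \<subseteq> N - {a} \<and> card T = k - 1})"
proof (rule set_eqI, rule iffI)
  fix T assume T: "T \<in> {T. T \<subseteq> N \<and> card T = k}"
  show "T \<in> {T. T \<subseteq> N - {a} \<and> card T = k} \<union>
     (if k = 0 then {} else insert a ` {T. T \<subseteq> N - {a} \<and> card T = k - 1})"
  proof (cases "a \<in> T")
    case True
    have fT: "finite T" using T assms finite_subset by auto
    then have "card T = Suc (card (T - {a}))" using True by (metis card_Suc_Diff1)
    moreover have "T = insert a (T - {a})" using True by auto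
    ultimately have k: "k \<noteq> 0" "card (T - {a}) = k - 1" using T by auto
    have "T - {a} \<in> {T. T \<subseteq> N - {a} \<and> card T = k - 1}" using T k by auto
    then have "T \<in> insert a ` {T. T \<subseteq> N - {a} \<and> card T = k - 1}"
      using \<open>T = insert a (T - {a})\<close> by (metis image_eqI)
    then show ?thesis using k by simp
  next
    case False then show ?thesis using T by auto
  qed
next
  fix T assume T: "T \<in> {T. T \<subseteq> N - {a} \<and> card T = k} \<union>
     (if k = 0 then {} else insert a ` {T. T \<subseteq> N - {a} \<and> card T = k - 1})"
  then show "T \<in> {T. T \<subseteq> N \<and> card T = k}"
  proof
    assume "T \<in> {T. T \<subseteq> N - {a} \<and> card T = k}" then show ?thesis by auto
  next
    assume h: "T \<in> (if k = 0 then {} else insert a ` {T. T \<subseteq> N - {a} \<and> card T = k - 1})"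
    then have k: "k \<noteq> 0" by (auto split: if_splits)
    then obtain T' where T': "T = insert a T'" "T' \<subseteq> N - {a}" "card T' = k - 1" using h by auto
    have "finite T'" using T' assms finite_subset by blast
    moreover have "a \<notin> T'" using T' by auto
    ultimately have "card T = k" using T' k by simp
    then show ?thesis using T' assms by auto
  qed
qed

lemma Kr_rec:
  assumes "finite N" "a \<in> N"
  shows "Kr N k S = Kr (N - {a}) k S + (if k = 0 then 0 else (if a \<in> S then -1 else 1) * Kr (N - {a}) (k-1) S)"
proof (cases "k = 0")
  case True
  then show ?thesis unfolding Kr_def using subsets_split[OF assms, of k] by simp
next
  case False
  let ?A = "{T. T \<subseteq> N - {a} \<and> card T = k}"
  let ?B = "{T. T \<subseteq> N - {a} \<and> card T = k - 1}"
  have fin: "finite ?A" "finite ?B" using assms by auto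
  have fin2: "finite (insert a ` ?B)" using fin by auto
  have disj: "?A \<inter> insert a ` ?B = {}" by auto
  have inj: "inj_on (insert a) ?B" by (rule inj_onI) (auto simp: insert_ident)
  have "Kr N k S = sum (\<lambda>T. chi T S) ?A + sum (\<lambda>T. chi T S) (insert a ` ?B)"
    unfolding Kr_def using subsets_split[OF assms, of k] False sum.union_disjoint[OF fin(1) fin2 disj] by simp
  also have "sum (\<lambda>T. chi T S) (insert a ` ?B) = sum (\<lambda>T. chi (insert a T) S) ?B"
    by (rule sum.reindex[OF inj, unfolded comp_def])
  also have "\<dots> = sum (\<lambda>T. (if a \<in> S then -1 else 1) * chi T S) ?B"
    apply (rule sum.cong, simp)
    apply (rule chi_insert) using assms finite_subset by auto
  finally show ?thesis using False unfolding Kr_def by (simp add: sum_distrib_left)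
qed

lemma Kr_K: "finite N \<Longrightarrow> card N = n \<Longrightarrow> Kr N k S = of_int (K n k (card (S \<inter> N)))"
proof (induction n arbitrary: N k)
  case 0
  then have "N = {}" by auto
  then have e: "{T. T \<subseteq> N \<and> card T = k} = (if k = 0 then {{}} else {})" by auto
  show ?case unfolding Kr_def e using \<open>N = {}\<close> by (simp add: chi_def)
next
  case (Suc m)
  show ?case
  proof (cases "S \<inter> N = {}")
    case True
    obtain a where a: "a \<in> N" using Suc.prems by fastforce
    have c: "card (N - {a}) = m" using Suc.prems a by auto
    have e: "S \<inter> (N - {a}) = {}" using True by auto
    show ?thesis using Kr_rec[OF Suc.prems(1) a, of k S] Suc.IH[of "N - {a}"] c e True a Suc.prems(1)
      by auto
  next
    case False
    then obtain a where a: "a \<in> S" "a \<in> N" by auto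
    have c: "card (N - {a}) = m" using Suc.prems a by auto
    have fSN: "finite (S \<inter> N)" using Suc.prems by auto
    have e: "card (S \<inter> (N - {a})) = card (S \<inter> N) - 1"
    proof -
      have "S \<inter> (N - {a}) = (S \<inter> N) - {a}" by auto
      then show ?thesis using fSN a by simp
    qed
    have pos: "card (S \<inter> N) \<noteq> 0" using fSN a by auto
    show ?thesis using Kr_rec[OF Suc.prems(1) a(2), of k S] Suc.IH[of "N - {a}"] c e pos a Suc.prems(1)
      by auto
  qed
qed

lemma neg1_pow_diff:
  assumes "finite A" "B \<subseteq> A"
  shows "((-1::real) ^ card (A - B)) = (-1) ^ card A * (-1) ^ card B"
proof -
  have "card A = card (A - B) + card B" using assms by (metis card_Diff_subset card_mono diff_add_inverse2 le_add_diff_inverse2 finite_subset)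
  then have "(-1::real) ^ card A * (-1) ^ card B = (-1) ^ card (A - B) * ((-1) ^ card B)^2"
    by (simp add: power_add power2_eq_square)
  then show ?thesis by (simp add: power_even_eq[symmetric] )
qed

lemma Kr_sym1:
  assumes "finite N" "S \<subseteq> N"
  shows "Kr N k (N - S) = (-1) ^ k * Kr N k S"
  unfolding Kr_def sum_distrib_left
proof (rule sum.cong, simp)
  fix T assume T: "T \<in> {T. T \<subseteq> N \<and> card T = k}"
  have fT: "finite T" using T assms finite_subset by auto
  have "T \<inter> (N - S) = T - (T \<inter> S)" using T by auto
  then show "chi T (N - S) = (-1) ^ k * chi T S" unfolding chi_def using neg1_pow_diff[OF fT, of "T \<inter> S"] T
    by (simp add: mult.commute)
qed

lemma chi_compl:
  assumes "finite N" "T \<subseteq> N"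
  shows "chi (N - T) S = (-1) ^ card (S \<inter> N) * chi T S"
proof -
  have "(N - T) \<inter> S = (N \<inter> S) - (T \<inter> S)" by auto
  moreover have "T \<inter> S \<subseteq> N \<inter> S" using assms by auto
  moreover have "finite (N \<inter> S)" using assms by auto
  ultimately show ?thesis unfolding chi_def
    using neg1_pow_diff[of "N \<inter> S" "T \<inter> S"] by (simp add: Int_commute)
qed

lemma Kr_sym2:
  assumes "finite N" "k \<le> card N"
  shows "Kr N (card N - k) S = (-1) ^ card (S \<inter> N) * Kr N k S"
  unfolding Kr_def sum_distrib_left
proof (rule sum.reindex_bij_witness[of _ "\<lambda>T. N - T" "\<lambda>T. N - T"])
  fix T assume T: "T \<in> {T. T \<subseteq> N \<and> card T = k}"
  show "N - (N - T) = T" using T by auto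
  show "N - T \<in> {T. T \<subseteq> N \<and> card T = card N - k}" using T assms by (auto simp: card_Diff_subset finite_subset)
next
  fix T assume T: "T \<in> {T. T \<subseteq> N \<and> card T = card N - k}"
  show "N - (N - T) = T" using T by auto
  have fT: "finite T" using T assms finite_subset by blast
  have "card (N - T) = card N - card T" using T card_Diff_subset[OF fT] by blast
  moreover have "card T = card N - k" using T by blast
  ultimately have "card (N - T) = k" using assms by linarith
  then show "N - T \<in> {T. T \<subseteq> N \<and> card T = k}" using T by auto
  have e: "N - (N - T) = T" using T by auto
  have "chi T S = (-1) ^ card (S \<inter> N) * chi (N - T) S"
    using chi_compl[OF assms(1), of "N - T" S] e by simp
  then show "(-1) ^ card (S \<inter> N) * chi (N - T) S = chi T S" by simp
qed

lemma card_lt_Int: "s \<le> n \<Longrightarrow> card ({..<s} \<inter> {..<n::nat}) = s"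
proof -
  assume "s \<le> n" then have "{..<s} \<inter> {..<n} = {..<s}" by auto
  then show ?thesis by simp
qed

lemma K_R1: "s < n \<Longrightarrow> K n k s = K (n-1) k s + (if k = 0 then 0 else K (n-1) (k-1) s)"
proof -
  assume s: "s < n"
  have a: "n - 1 \<in> {..<n}" using s by auto
  have d: "{..<n} - {n-1} = {..<n-1}" using s by auto
  have "real_of_int (K n k s) = real_of_int (K (n-1) k s + (if k = 0 then 0 else K (n-1) (k-1) s))"
    using Kr_rec[OF _ a, of k "{..<s}"] Kr_K[of "{..<n}" n k "{..<s}"] Kr_K[of "{..<n-1}" "n-1" _ "{..<s}"]
      d s card_lt_Int[of s n] card_lt_Int[of s "n-1"] by (auto split: if_splits)
  then show ?thesis by linarith
qed

lemma K_sym1: "s \<le> n \<Longrightarrow> K n k (n - s) = (-1) ^ k * K n k s"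
proof -
  assume s: "s \<le> n"
  have e: "{..<n} - {..<s} = {s..<n}" by auto
  have "({..<n} - {..<s}) \<inter> {..<n} = {s..<n}" using e by auto
  then have c: "card (({..<n} - {..<s}) \<inter> {..<n}) = n - s" by simp
  have "real_of_int (K n k (n - s)) = real_of_int ((-1) ^ k * K n k s)"
    using Kr_sym1[of "{..<n}" "{..<s}" k] Kr_K[of "{..<n}" n k] c card_lt_Int[OF s] s by auto
  then show ?thesis by linarith
qed

lemma K_sym2: "k \<le> n \<Longrightarrow> s \<le> n \<Longrightarrow> K n (n - k) s = (-1) ^ s * K n k s"
proof -
  assume k: "k \<le> n" and s: "s \<le> n"
  have "real_of_int (K n (n - k) s) = real_of_int ((-1) ^ s * K n k s)"
    using Kr_sym2[of "{..<n}" k "{..<s}"] Kr_K[of "{..<n}" n _ "{..<s}"] card_lt_Int[OF s] k by auto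
  then show ?thesis by linarith
qed

lemma K_0: "K n k 0 = int (n choose k)"
proof (induction n arbitrary: k)
  case 0 then show ?case by simp
next
  case (Suc m) then show ?case by (cases k) auto
qed

lemma K_k0: "K n 0 s = 1"
  by (induction n arbitrary: s) auto

lemma K_1: "n \<ge> 1 \<Longrightarrow> k \<ge> 1 \<Longrightarrow> K n k 1 = int ((n-1) choose k) - int ((n-1) choose (k-1))"
  by (cases n) (auto simp: K_0)

lemma K_j1: "s \<le> n \<Longrightarrow> K n 1 s = int n - 2 * int s"
proof (induction n arbitrary: s)
  case 0 then show ?case by simp
next
  case (Suc m) then show ?case by (cases s) (auto simp: K_0 K_k0)
qed

lemma K_1_nonneg: "2 * j < n \<Longrightarrow> 0 \<le> K n j 1"
proof (cases "j = 0")
  case True then show ?thesis by (simp add: K_k0)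
next
  case False
  assume h: "2 * j < n"
  have "(n-1) choose (j-1) \<le> (n-1) choose j" by (rule binomial_mono) (use h in auto)
  then show ?thesis using K_1[of n j] h False by simp
qed

lemma K_odd_central: "odd s \<Longrightarrow> s \<le> 2 * j \<Longrightarrow> K (2 * j) j s = 0"
proof -
  assume "odd s" "s \<le> 2 * j"
  then have "K (2*j) (2*j - j) s = - K (2*j) j s" using K_sym2[of j "2*j" s] by simp
  then show ?thesis by simp
qed

lemma K_B: "2 * j < n \<Longrightarrow> 1 \<le> s \<Longrightarrow> s \<le> n - 1 \<Longrightarrow> \<bar>K n j s\<bar> \<le> K n j 1"
proof (induction n arbitrary: j s)
  case 0 then show ?case by simp
next
  case (Suc m)
  show ?case
  proof (cases "j = 0")
    case True then show ?thesis by (simp add: K_k0)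
  next
    case j: False
    have nn: "0 \<le> K (Suc m) j 1" using K_1_nonneg Suc.prems by blast
    show ?thesis
    proof (cases "s = m")
      case True
      then have "K (Suc m) j s = (-1) ^ j * K (Suc m) j 1" using K_sym1[of 1 "Suc m" j] by simp
      then have "\<bar>K (Suc m) j s\<bar> = \<bar>K (Suc m) j 1\<bar>" by (simp add: abs_mult)
      then show ?thesis using nn by simp
    next
      case False
      then have s: "1 \<le> s" "s \<le> m - 1" using Suc.prems by auto
      have R1s: "K (Suc m) j s = K m j s + K m (j-1) s" using K_R1[of s "Suc m" j] s j by simp
      have R11: "K (Suc m) j 1 = K m j 1 + K m (j-1) 1" using K_R1[of 1 "Suc m" j] s j by simp
      have IH2: "\<bar>K m (j-1) s\<bar> \<le> K m (j-1) 1" using Suc.IH[of "j-1" s] Suc.prems s j by simp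
      show ?thesis
      proof (cases "2 * j < m")
        case True
        have "\<bar>K m j s\<bar> \<le> K m j 1" using Suc.IH[of j s] True s by simp
        then show ?thesis using R1s R11 IH2 abs_triangle_ineq[of "K m j s" "K m (j-1) s"] by linarith
      next
        case False
        then have mj: "m = 2 * j" using Suc.prems by simp
        have c1: "K m j 1 = 0" using K_odd_central[of 1 j] mj j by simp
        show ?thesis
        proof (cases "odd s")
          case True
          have "K m j s = 0" using K_odd_central[of s j] mj True s by simp
          then show ?thesis using R1s R11 IH2 c1 by simp
        next
          case False
          then have s2: "s \<ge> 2" using s by presburger
          have "K (Suc m) j s = K m j (s-1) - K m (j-1) (s-1)" using s2 j by (cases s) auto
          moreover have "K m j (s-1) = 0" using K_odd_central[of "s-1" j] mj False s2 s by simp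
          moreover have "\<bar>K m (j-1) (s-1)\<bar> \<le> K m (j-1) 1" using Suc.IH[of "j-1" "s-1"] Suc.prems s s2 j by simp
          ultimately show ?thesis using R11 c1 by simp
        qed
      qed
    qed
  qed
qed

lemma K_C: "2 * j + 2 \<le> n \<Longrightarrow> 1 \<le> j \<Longrightarrow> 2 \<le> s \<Longrightarrow> s \<le> n - 2 \<Longrightarrow> \<bar>K n j s\<bar> < K n j 1"
proof (induction n arbitrary: j s)
  case 0 then show ?case by simp
next
  case (Suc m)
  show ?case
  proof (cases "j = 1")
    case True
    then show ?thesis using K_j1[of s "Suc m"] K_j1[of 1 "Suc m"] Suc.prems by auto
  next
    case j: False
    then have j2: "j \<ge> 2" using Suc.prems by simp
    show ?thesis
    proof (cases "s = m - 1")
      case True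
      then have "K (Suc m) j s = (-1) ^ j * K (Suc m) j 2" using K_sym1[of 2 "Suc m" j] Suc.prems by simp
      then have e: "\<bar>K (Suc m) j s\<bar> = \<bar>K (Suc m) j 2\<bar>" by (simp add: abs_mult)
      have "\<bar>K (Suc m) j 2\<bar> < K (Suc m) j 1" proof -
        have "2 \<le> m - 2" using Suc.prems j2 by simp
        have R1s: "K (Suc m) j 2 = K m j 2 + K m (j-1) 2" using K_R1[of 2 "Suc m" j] Suc.prems j2 by simp
        have R11: "K (Suc m) j 1 = K m j 1 + K m (j-1) 1" using K_R1[of 1 "Suc m" j] Suc.prems j2 by simp
        have "\<bar>K m (j-1) 2\<bar> < K m (j-1) 1" using Suc.IH[of "j-1" 2] Suc.prems j2 by simp
        moreover have "\<bar>K m j 2\<bar> \<le> K m j 1" using K_B[of j m 2] Suc.prems j2 by simp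
        ultimately show ?thesis using R1s R11 abs_triangle_ineq[of "K m j 2" "K m (j-1) 2"] by linarith
      qed
      then show ?thesis using e by simp
    next
      case False
      then have s: "2 \<le> s" "s \<le> m - 2" using Suc.prems by auto
      have R1s: "K (Suc m) j s = K m j s + K m (j-1) s" using K_R1[of s "Suc m" j] s j2 by simp
      have R11: "K (Suc m) j 1 = K m j 1 + K m (j-1) 1" using K_R1[of 1 "Suc m" j] s j2 by simp
      have "\<bar>K m (j-1) s\<bar> < K m (j-1) 1" using Suc.IH[of "j-1" s] Suc.prems s j2 by simp
      moreover have "\<bar>K m j s\<bar> \<le> K m j 1" using K_B[of j m s] Suc.prems s j2 by simp
      ultimately show ?thesis using R1s R11 abs_triangle_ineq[of "K m j s" "K m (j-1) s"] by linarith
    qed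
  qed
qed



definition fh :: "nat set \<Rightarrow> (nat set \<Rightarrow> real) \<Rightarrow> nat set \<Rightarrow> real" where
  "fh N g S = (\<Sum>x\<in>Pow N. chi S x * g x)"

definition Am :: "nat \<Rightarrow> nat set \<Rightarrow> nat set \<Rightarrow> real" where
  "Am k x y = (if card (sd x y) = k then 1 else 0)"

definition Ag :: "nat set \<Rightarrow> nat \<Rightarrow> (nat set \<Rightarrow> real) \<Rightarrow> nat set \<Rightarrow> real" where
  "Ag N k g x = (\<Sum>y\<in>Pow N. Am k x y * g y)"

lemma chi_comm: "chi S x = chi x S"
  unfolding chi_def by (simp add: Int_commute)

lemma chi_mult:
  assumes "finite S"
  shows "chi S x * chi S y = chi S (sd x y)"
proof -
  have a: "card (S \<inter> x) = card (S \<inter> (x - y)) + card (S \<inter> x \<inter> y)"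
    using assms by (subst card_Un_disjoint[symmetric]) (auto intro: arg_cong[where f=card])
  have b: "card (S \<inter> y) = card (S \<inter> (y - x)) + card (S \<inter> x \<inter> y)"
    using assms by (subst card_Un_disjoint[symmetric]) (auto intro: arg_cong[where f=card])
  have c: "card (S \<inter> sd x y) = card (S \<inter> (x - y)) + card (S \<inter> (y - x))"
    unfolding sd_def using assms by (subst card_Un_disjoint[symmetric]) (auto intro: arg_cong[where f=card])
  have "chi S x * chi S y = (-1) ^ (card (S \<inter> (x - y)) + card (S \<inter> (y - x))) * ((-1) ^ card (S \<inter> x \<inter> y))^2"
    unfolding chi_def a b by (simp add: power_add power2_eq_square)
  then show ?thesis unfolding chi_def c by (simp add: power_even_eq[symmetric])
qed

lemma sum_chi:
  assumes "finite N" "w \<subseteq> N"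
  shows "(\<Sum>S\<in>Pow N. chi S w) = (if w = {} then 2 ^ card N else 0)"
proof (cases "w = {}")
  case True
  then show ?thesis unfolding chi_def using assms by (simp add: card_Pow)
next
  case False
  then obtain a where a: "a \<in> w" by auto
  have aN: "a \<in> N" using a assms by auto
  let ?M = "N - {a}"
  have N: "N = insert a ?M" using aN by auto
  have fM: "finite ?M" using assms by auto
  have "Pow N = Pow ?M \<union> insert a ` Pow ?M" by (subst N, rule Pow_insert)
  moreover have "Pow ?M \<inter> insert a ` Pow ?M = {}" by auto
  moreover have inj: "inj_on (insert a) (Pow ?M)" by (rule inj_onI) (auto simp: insert_ident)
  ultimately have "(\<Sum>S\<in>Pow N. chi S w) = (\<Sum>S\<in>Pow ?M. chi S w) + (\<Sum>S\<in>Pow ?M. chi (insert a S) w)"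
    using fM by (simp add: sum.union_disjoint sum.reindex)
  also have "(\<Sum>S\<in>Pow ?M. chi (insert a S) w) = (\<Sum>S\<in>Pow ?M. - chi S w)"
    apply (rule sum.cong, simp)
    subgoal for S using chi_insert[of S a w] a fM finite_subset[of S "N-{a}"] by auto
    done
  finally show ?thesis using False by (simp add: sum_negf)
qed

lemma sd_inv: "sd x (sd x y) = y" unfolding sd_def by auto
lemma sd_comm: "sd x y = sd y x" unfolding sd_def by auto
lemma sd_sub: "x \<subseteq> N \<Longrightarrow> y \<subseteq> N \<Longrightarrow> sd x y \<subseteq> N" unfolding sd_def by auto
lemma sd_empty: "sd x y = {} \<longleftrightarrow> x = y" unfolding sd_def by auto

lemma shift_sum:
  assumes "x \<subseteq> N"
  shows "(\<Sum>y\<in>Pow N. h y) = (\<Sum>T\<in>Pow N. h (sd x T))"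
  by (rule sum.reindex_bij_witness[of _ "sd x" "sd x"]) (use assms in \<open>auto simp: sd_inv sd_sub\<close>)

lemma inversion:
  assumes "finite N" "x \<in> Pow N"
  shows "(\<Sum>S\<in>Pow N. chi S x * fh N g S) = 2 ^ card N * g x"
proof -
  have "(\<Sum>S\<in>Pow N. chi S x * fh N g S) = (\<Sum>S\<in>Pow N. \<Sum>y\<in>Pow N. chi S (sd x y) * g y)"
    unfolding fh_def sum_distrib_left
    apply (rule sum.cong, simp, rule sum.cong, simp)
    using chi_mult assms finite_subset by (metis PowD mult.assoc)
  also have "\<dots> = (\<Sum>y\<in>Pow N. g y * (\<Sum>S\<in>Pow N. chi (sd x y) S))"
    by (subst sum.swap) (simp add: sum_distrib_left chi_comm mult.commute)
  also have "\<dots> = (\<Sum>y\<in>Pow N. if y = x then 2 ^ card N * g y else 0)"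
  proof (rule sum.cong, simp)
    fix y assume y: "y \<in> Pow N"
    have "sd x y \<subseteq> N" using sd_sub[of x N y] y assms by auto
    then show "g y * (\<Sum>S\<in>Pow N. chi (sd x y) S) = (if y = x then 2 ^ card N * g y else 0)"
      using sum_chi[OF assms(1), of "sd x y"] sd_empty[of x y] sum.cong[OF refl, of "Pow N" "chi (sd x y)" "\<lambda>S. chi S (sd x y)"] chi_comm
      by auto
  qed
  also have "\<dots> = 2 ^ card N * g x" using assms by simp
  finally show ?thesis .
qed

lemma parseval_gen:
  assumes "finite N"
  shows "(\<Sum>S\<in>Pow N. fh N h S * fh N g S) = 2 ^ card N * (\<Sum>x\<in>Pow N. h x * g x)"
proof -
  have e: "fh N h S * c = (\<Sum>x\<in>Pow N. h x * (chi S x * c))" for S c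
    unfolding fh_def sum_distrib_right by (simp add: mult_ac)
  have "(\<Sum>S\<in>Pow N. fh N h S * fh N g S) = (\<Sum>S\<in>Pow N. \<Sum>x\<in>Pow N. h x * (chi S x * fh N g S))"
    by (simp only: e)
  also have "\<dots> = (\<Sum>x\<in>Pow N. h x * (\<Sum>S\<in>Pow N. chi S x * fh N g S))"
    by (subst sum.swap) (simp add: sum_distrib_left)
  also have "\<dots> = (\<Sum>x\<in>Pow N. h x * (2 ^ card N * g x))"
    by (rule sum.cong, simp) (simp add: inversion[OF assms])
  finally show ?thesis by (simp add: sum_distrib_left mult_ac)
qed

lemma Am_chi_sum:
  assumes "finite N" "S \<in> Pow N" "y \<in> Pow N"
  shows "(\<Sum>x\<in>Pow N. Am k x y * chi S x) = chi S y * Kr N k S"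
proof -
  have "(\<Sum>x\<in>Pow N. Am k x y * chi S x) = (\<Sum>T\<in>Pow N. Am k (sd y T) y * chi S (sd y T))"
    using shift_sum[of y N] assms by simp
  also have "\<dots> = (\<Sum>T\<in>Pow N. if card T = k then chi S y * chi T S else 0)"
  proof (rule sum.cong, simp)
    fix T assume "T \<in> Pow N"
    have fS: "finite S" using assms finite_subset by auto
    have "sd (sd y T) y = T" by (metis sd_comm sd_inv)
    moreover have "chi S (sd y T) = chi S y * chi T S" using chi_mult[OF fS, of y T] chi_comm[of S T] by simp
    ultimately show "Am k (sd y T) y * chi S (sd y T) = (if card T = k then chi S y * chi T S else 0)"
      unfolding Am_def by simp
  qed
  also have "\<dots> = chi S y * Kr N k S"
  proof -
    have e: "{T. T \<subseteq> N \<and> card T = k} = {T\<in>Pow N. card T = k}" by auto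
    show ?thesis unfolding Kr_def e sum_distrib_left
      by (rule sum.inter_filter[symmetric]) (use assms in auto)
  qed
  finally show ?thesis .
qed

lemma fh_Ag:
  assumes "finite N" "S \<in> Pow N"
  shows "fh N (Ag N k g) S = Kr N k S * fh N g S"
proof -
  have inner: "(\<Sum>x\<in>Pow N. Am k x y * chi S x) = chi S y * Kr N k S" if y: "y \<in> Pow N" for y
    using Am_chi_sum[OF assms y] .
  have "fh N (Ag N k g) S = (\<Sum>y\<in>Pow N. g y * (\<Sum>x\<in>Pow N. Am k x y * chi S x))"
    unfolding fh_def Ag_def sum_distrib_left sum_distrib_right
    by (subst sum.swap) (simp add: mult_ac)
  also have "\<dots> = (\<Sum>y\<in>Pow N. g y * (chi S y * Kr N k S))"
    by (rule sum.cong, simp) (simp add: inner)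
  also have "\<dots> = Kr N k S * fh N g S" unfolding fh_def sum_distrib_left
    by (rule sum.cong) (simp_all add: mult_ac)
  finally show ?thesis .
qed

lemma QF:
  assumes "finite N"
  shows "(\<Sum>x\<in>Pow N. Ag N k g x * g x) = (\<Sum>S\<in>Pow N. Kr N k S * (fh N g S)^2) / 2 ^ card N"
proof -
  have "(\<Sum>S\<in>Pow N. Kr N k S * (fh N g S)^2) = (\<Sum>S\<in>Pow N. fh N (Ag N k g) S * fh N g S)"
    by (rule sum.cong, simp) (simp add: fh_Ag[OF assms] power2_eq_square)
  also have "\<dots> = 2 ^ card N * (\<Sum>x\<in>Pow N. Ag N k g x * g x)" by (rule parseval_gen[OF assms])
  finally show ?thesis by simp
qed

lemma parseval:
  assumes "finite N"
  shows "(\<Sum>x\<in>Pow N. (g x)^2) = (\<Sum>S\<in>Pow N. (fh N g S)^2) / 2 ^ card N"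
  using parseval_gen[OF assms, of g g] by (simp add: power2_eq_square)



lemma Am_sym: "Am k x y = Am k y x" unfolding Am_def by (simp add: sd_comm)

lemma K_lower:
  assumes "even k" "n + 1 \<le> 2 * k" "k \<le> n" "s \<le> n"
  shows "K n k 1 \<le> K n k s"
proof -
  define j where "j = n - k"
  have j: "2 * j < n" "j \<le> n" "k = n - j" using assms unfolding j_def by auto
  have ks: "K n k s = (-1) ^ s * K n j s" using K_sym2[OF j(2) assms(4)] j(3) by simp
  have k1: "K n k 1 = - K n j 1" using K_sym2[of j n 1] j assms by simp
  have nn: "0 \<le> K n j 1" using K_1_nonneg[OF j(1)] .
  show ?thesis
  proof (cases "s = 0")
    case True then show ?thesis using k1 nn K_0[of n k] by simp
  next
    case False
    show ?thesis
    proof (cases "s = n")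
      case True
      have "K n k (n - 0) = (-1) ^ k * K n k 0" using K_sym1[of 0 n k] by simp
      then have "K n k s = int (n choose k)" using True assms(1) K_0[of n k] by simp
      then show ?thesis using k1 nn by simp
    next
      case False
      then have "\<bar>K n j s\<bar> \<le> K n j 1" using K_B[OF j(1)] \<open>s \<noteq> 0\<close> assms by simp
      moreover have "\<bar>K n k s\<bar> = \<bar>K n j s\<bar>" using ks by (simp add: abs_mult)
      ultimately show ?thesis using k1 by linarith
    qed
  qed
qed

lemma K_strict:
  assumes "even k" "n + 2 \<le> 2 * k" "k + 1 \<le> n" "s \<le> n" "s \<noteq> 1" "s \<noteq> n - 1"
  shows "K n k 1 < K n k s"
proof -
  define j where "j = n - k"
  have j: "2 * j + 2 \<le> n" "j \<le> n" "k = n - j" "1 \<le> j" "2 * j < n" using assms unfolding j_def by auto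
  have ks: "K n k s = (-1) ^ s * K n j s" using K_sym2[OF j(2) assms(4)] j(3) by simp
  have k1: "K n k 1 = - K n j 1" using K_sym2[of j n 1] j assms by simp
  have nn: "0 \<le> K n j 1" using K_1_nonneg[OF j(5)] .
  have pos: "0 < int (n choose k)" using assms by simp
  show ?thesis
  proof (cases "s = 0")
    case True
    then have "K n k s = int (n choose k)" using K_0[of n k] by simp
    then show ?thesis using k1 nn pos by linarith
  next
    case False
    show ?thesis
    proof (cases "s = n")
      case True
      have "K n k (n - 0) = (-1) ^ k * K n k 0" using K_sym1[of 0 n k] by simp
      then have "K n k s = int (n choose k)" using True assms(1) K_0[of n k] by simp
      then show ?thesis using k1 nn pos by linarith
    next
      case False
      then have "\<bar>K n j s\<bar> < K n j 1" using K_C[OF j(1) j(4)] \<open>s \<noteq> 0\<close> assms by simp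
      moreover have "\<bar>K n k s\<bar> = \<bar>K n j s\<bar>" using ks by (simp add: abs_mult)
      ultimately show ?thesis using k1 by linarith
    qed
  qed
qed

lemma lam_formula:
  assumes "1 \<le> k" "k \<le> n"
  shows "real_of_int (K n k 1) = (real n - 2 * real k) / real k * real ((n - 1) choose (k - 1))"
    and "real (n choose k) = real n / real k * real ((n - 1) choose (k - 1))"
proof -
  have a: "k * (n choose k) = n * ((n - 1) choose (k - 1))" using times_binomial_minus1_eq[of k n] assms by simp
  have b: "(n - k) * (n choose k) = n * ((n - 1) choose k)" by (rule binomial_absorb_comp)
  have n0: "real n > 0" "real k > 0" using assms by auto
  have a': "real k * real (n choose k) = real n * real ((n - 1) choose (k - 1))"
    using arg_cong[OF a, of real] by simp
  have b': "(real n - real k) * real (n choose k) = real n * real ((n - 1) choose k)"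
    using arg_cong[OF b, of real] assms by (simp add: of_nat_diff)
  have K1: "real_of_int (K n k 1) = real ((n - 1) choose k) - real ((n - 1) choose (k - 1))"
    using K_1[of n k] assms by simp
  have c: "real ((n - 1) choose (k - 1)) = real k * real (n choose k) / real n" using a' n0 by (simp add: field_simps)
  have d: "real ((n - 1) choose k) = (real n - real k) * real (n choose k) / real n" using b' n0 by (simp add: field_simps)
  show "real (n choose k) = real n / real k * real ((n - 1) choose (k - 1))"
    using c n0 by simp
  have "real ((n - 1) choose k) - real ((n - 1) choose (k - 1)) = (real n - 2 * real k) * real (n choose k) / real n"
    unfolding c d by (simp add: diff_divide_distrib[symmetric] algebra_simps)
  also have "\<dots> = (real n - 2 * real k) / real k * real ((n - 1) choose (k - 1))"
    unfolding c using n0 by simp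
  finally show "real_of_int (K n k 1) = (real n - 2 * real k) / real k * real ((n - 1) choose (k - 1))"
    unfolding K1 .
qed



definition ext :: "nat set set \<Rightarrow> (nat set \<Rightarrow> real) \<Rightarrow> nat set \<Rightarrow> real" where
  "ext V f x = (if x \<in> V then f x else 0)"

lemma V_eq: "Hverts n = {x \<in> Pow {..<n}. even (card x)}" by (auto simp: Hverts_def)

lemma mat_eq: "Hadj_mat n k x y = Am k x y" by (simp add: Hadj_mat_def Hadj_def Am_def sd_def)

lemma adj_eq: "Hadj n k x y \<longleftrightarrow> card (sd x y) = k" by (simp add: Hadj_def sd_def)

lemma parity:
  assumes "finite x" "finite y"
  shows "card (sd x y) + 2 * card (x \<inter> y) = card x + card y"
proof -
  have a: "card x = card (x - y) + card (x \<inter> y)"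
    using assms by (subst card_Un_disjoint[symmetric]) (auto intro: arg_cong[where f=card])
  have b: "card y = card (y - x) + card (x \<inter> y)"
    using assms by (subst card_Un_disjoint[symmetric]) (auto intro: arg_cong[where f=card])
  have c: "card (sd x y) = card (x - y) + card (y - x)"
    unfolding sd_def using assms by (subst card_Un_disjoint[symmetric]) (auto intro: arg_cong[where f=card])
  show ?thesis using a b c by simp
qed

lemma Am_parity:
  assumes "even k" "finite x" "finite y" "even (card y)" "odd (card x)"
  shows "Am k x y = 0"
proof -
  have "card (sd x y) + 2 * card (x \<inter> y) = card x + card y" by (rule parity[OF assms(2,3)])
  then have "odd (card (sd x y))" using assms(4,5) by presburger
  then show ?thesis unfolding Am_def using assms(1) by auto
qed

lemma finV: "finite (Hverts n)" unfolding V_eq by simp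

lemma Ag_ext: "Ag {..<n} k (ext (Hverts n) f) x = (\<Sum>y\<in>Hverts n. Am k x y * f y)"
proof -
  have "(\<Sum>y\<in>Hverts n. Am k x y * f y) = (\<Sum>y\<in>Pow {..<n}. if even (card y) then Am k x y * f y else 0)"
    unfolding V_eq by (rule sum.inter_filter) simp
  also have "\<dots> = Ag {..<n} k (ext (Hverts n) f) x"
    unfolding Ag_def ext_def by (rule sum.cong) (auto simp: V_eq)
  finally show ?thesis by simp
qed

lemma sumV_full:
  assumes "even k" "x \<in> Hverts n"
  shows "(\<Sum>y\<in>Hverts n. Am k x y * h y) = (\<Sum>y\<in>Pow {..<n}. Am k x y * h y)"
proof (rule sum.mono_neutral_left)
  show "finite (Pow {..<n})" by simp
  show "Hverts n \<subseteq> Pow {..<n}" unfolding V_eq by auto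
  show "\<forall>y\<in>Pow {..<n} - Hverts n. Am k x y * h y = 0"
  proof
    fix y assume y: "y \<in> Pow {..<n} - Hverts n"
    have "Am k y x = 0"
      by (rule Am_parity) (use assms y in \<open>auto simp: V_eq intro: finite_subset\<close>)
    then show "Am k x y * h y = 0" by (simp add: Am_sym)
  qed
qed

lemma eig_fourier:
  assumes "even k" "is_eigenvector (Hverts n) (Hadj_mat n k) l f"
  shows "(\<forall>S\<in>Pow {..<n}. fh {..<n} (ext (Hverts n) f) S \<noteq> 0 \<longrightarrow> Kr {..<n} k S = l)
       \<and> (\<exists>S\<in>Pow {..<n}. fh {..<n} (ext (Hverts n) f) S \<noteq> 0)"
proof -
  let ?N = "{..<n::nat}" and ?V = "Hverts n" and ?g = "ext (Hverts n) f"
  have eq: "\<And>x. x \<in> ?V \<Longrightarrow> (\<Sum>y\<in>?V. Am k x y * f y) = l * f x"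
    using assms(2) unfolding is_eigenvector_def mat_eq by auto
  obtain x0 where x0: "x0 \<in> ?V" "f x0 \<noteq> 0" using assms(2) unfolding is_eigenvector_def by auto
  have Agl: "Ag ?N k ?g x = l * ?g x" if x: "x \<in> Pow ?N" for x
  proof (cases "x \<in> ?V")
    case True then show ?thesis using eq[OF True] Ag_ext[of n k f x] unfolding ext_def by simp
  next
    case False
    have "(\<Sum>y\<in>?V. Am k x y * f y) = 0"
    proof (rule sum.neutral, rule ballI)
      fix y assume "y \<in> ?V"
      then show "Am k x y * f y = 0" using Am_parity[OF assms(1), of x y] x False
        by (auto simp: V_eq intro: finite_subset)
    qed
    then show ?thesis using Ag_ext[of n k f x] False unfolding ext_def by simp
  qed
  have A1: "Kr ?N k S = l" if S: "S \<in> Pow ?N" "fh ?N ?g S \<noteq> 0" for S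
  proof -
    have "fh ?N (Ag ?N k ?g) S = l * fh ?N ?g S"
      unfolding fh_def sum_distrib_left by (rule sum.cong) (auto simp: Agl)
    then have "Kr ?N k S * fh ?N ?g S = l * fh ?N ?g S" using fh_Ag[of ?N S k ?g] S by simp
    then show ?thesis using S(2) by simp
  qed
  have A2: "\<exists>S\<in>Pow ?N. fh ?N ?g S \<noteq> 0"
  proof (rule ccontr)
    assume "\<not> ?thesis"
    then have "(\<Sum>S\<in>Pow ?N. chi S x0 * fh ?N ?g S) = 0" by simp
    moreover have "x0 \<in> Pow ?N" using x0 by (auto simp: V_eq)
    ultimately have "2 ^ card ?N * ?g x0 = 0" using inversion[of ?N x0 ?g] by simp
    then show False using x0 unfolding ext_def by simp
  qed
  show ?thesis using A1 A2 by blast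
qed



lemma Kr_card: "S \<subseteq> {..<n} \<Longrightarrow> Kr {..<n} k S = real_of_int (K n k (card S))"
  using Kr_K[of "{..<n}" n k S] by (simp add: Int_absorb2)

lemma eig_eq_chi:
  assumes "even k" "S \<subseteq> {..<n}" "x \<in> Hverts n"
  shows "(\<Sum>y\<in>Hverts n. Hadj_mat n k x y * chi S y) = Kr {..<n} k S * chi S x"
proof -
  have "(\<Sum>y\<in>Hverts n. Hadj_mat n k x y * chi S y) = (\<Sum>y\<in>Pow {..<n}. Am k x y * chi S y)"
    unfolding mat_eq by (rule sumV_full[OF assms(1,3)])
  also have "\<dots> = (\<Sum>y\<in>Pow {..<n}. Am k y x * chi S y)" by (simp add: Am_sym)
  also have "\<dots> = chi S x * Kr {..<n} k S"
    by (rule Am_chi_sum) (use assms in \<open>auto simp: V_eq\<close>)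
  finally show ?thesis by simp
qed

lemma empty_V: "{} \<in> Hverts n" by (simp add: Hverts_def)

lemma eigvals_sub:
  assumes "even k"
  shows "{l. is_eigenvalue (Hverts n) (Hadj_mat n k) l} \<subseteq> (\<lambda>S. Kr {..<n} k S) ` Pow {..<n}"
proof
  fix l assume "l \<in> {l. is_eigenvalue (Hverts n) (Hadj_mat n k) l}"
  then obtain f where f: "is_eigenvector (Hverts n) (Hadj_mat n k) l f" unfolding is_eigenvalue_def by auto
  from eig_fourier[OF assms f] obtain S where "S \<in> Pow {..<n}" "Kr {..<n} k S = l" by blast
  then show "l \<in> (\<lambda>S. Kr {..<n} k S) ` Pow {..<n}" by auto
qed

lemma lambda_min_eq:
  assumes "even k" "n + 1 \<le> 2 * k" "k \<le> n" "n > 0"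
  shows "lambda_min (Hverts n) (Hadj_mat n k) = real_of_int (K n k 1)"
  unfolding lambda_min_def
proof (rule Min_eqI)
  show "finite {l. is_eigenvalue (Hverts n) (Hadj_mat n k) l}"
    by (rule finite_subset[OF eigvals_sub[OF assms(1)]]) simp
  show "real_of_int (K n k 1) \<in> {l. is_eigenvalue (Hverts n) (Hadj_mat n k) l}"
  proof -
    have s: "{0} \<subseteq> {..<n}" using assms by auto
    have "is_eigenvector (Hverts n) (Hadj_mat n k) (real_of_int (K n k 1)) (chi {0})"
      unfolding is_eigenvector_def
    proof
      show "\<exists>x\<in>Hverts n. chi {0} x \<noteq> 0" using empty_V by (auto simp: chi_def)
      show "\<forall>x\<in>Hverts n. (\<Sum>y\<in>Hverts n. Hadj_mat n k x y * chi {0} y) = real_of_int (K n k 1) * chi {0} x"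
        using eig_eq_chi[OF assms(1) s] Kr_card[OF s, of k] by simp
    qed
    then show ?thesis unfolding is_eigenvalue_def by auto
  qed
  fix l assume "l \<in> {l. is_eigenvalue (Hverts n) (Hadj_mat n k) l}"
  then obtain S where S: "S \<in> Pow {..<n}" "l = Kr {..<n} k S" using eigvals_sub[OF assms(1)] by blast
  have "card S \<le> n" using S card_mono[of "{..<n}" S] by auto
  then show "real_of_int (K n k 1) \<le> l" using S Kr_card[of S n k] K_lower[OF assms(1-3)] by simp
qed



lemma sum_ext: "(\<Sum>x\<in>Pow {..<n}. ext (Hverts n) f x * h x) = (\<Sum>x\<in>Hverts n. f x * h x)"
proof -
  have "(\<Sum>x\<in>Hverts n. f x * h x) = (\<Sum>x\<in>Pow {..<n}. if even (card x) then f x * h x else 0)"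
    unfolding V_eq by (rule sum.inter_filter) simp
  also have "\<dots> = (\<Sum>x\<in>Pow {..<n}. ext (Hverts n) f x * h x)"
    unfolding ext_def by (rule sum.cong) (auto simp: V_eq)
  finally show ?thesis by simp
qed

lemma qf_bound:
  assumes "even k" "n + 1 \<le> 2 * k" "k \<le> n"
  shows "real_of_int (K n k 1) * (\<Sum>x\<in>Hverts n. (f x)^2)
         \<le> (\<Sum>x\<in>Hverts n. \<Sum>y\<in>Hverts n. Am k x y * f x * f y)"
proof -
  let ?N = "{..<n::nat}" and ?g = "ext (Hverts n) f" and ?l = "real_of_int (K n k 1)"
  have fN: "finite ?N" by simp
  have a: "(\<Sum>x\<in>Pow ?N. Ag ?N k ?g x * ?g x) = (\<Sum>x\<in>Hverts n. \<Sum>y\<in>Hverts n. Am k x y * f x * f y)"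
  proof -
    have "(\<Sum>x\<in>Pow ?N. Ag ?N k ?g x * ?g x) = (\<Sum>x\<in>Pow ?N. ?g x * (\<Sum>y\<in>Hverts n. Am k x y * f y))"
      by (simp add: Ag_ext mult.commute)
    also have "\<dots> = (\<Sum>x\<in>Hverts n. f x * (\<Sum>y\<in>Hverts n. Am k x y * f y))" by (rule sum_ext)
    finally show ?thesis by (simp add: sum_distrib_left mult_ac)
  qed
  have b: "(\<Sum>x\<in>Pow ?N. (?g x)^2) = (\<Sum>x\<in>Hverts n. (f x)^2)"
  proof -
    have "(\<Sum>x\<in>Hverts n. f x * ?g x) = (\<Sum>x\<in>Hverts n. (f x)^2)"
      by (rule sum.cong) (auto simp: ext_def power2_eq_square)
    then show ?thesis using sum_ext[of n f ?g] by (simp add: power2_eq_square)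
  qed
  have "?l * (\<Sum>S\<in>Pow ?N. (fh ?N ?g S)^2) \<le> (\<Sum>S\<in>Pow ?N. Kr ?N k S * (fh ?N ?g S)^2)"
    unfolding sum_distrib_left
  proof (rule sum_mono)
    fix S assume S: "S \<in> Pow ?N"
    have "card S \<le> n" using S card_mono[of "{..<n}" S] by auto
    then have "?l \<le> Kr ?N k S" using S Kr_card[of S n k] K_lower[OF assms] by simp
    then show "?l * (fh ?N ?g S)^2 \<le> Kr ?N k S * (fh ?N ?g S)^2" by (rule mult_right_mono) simp
  qed
  then have "?l * ((\<Sum>S\<in>Pow ?N. (fh ?N ?g S)^2) / 2 ^ card ?N) \<le> (\<Sum>S\<in>Pow ?N. Kr ?N k S * (fh ?N ?g S)^2) / 2 ^ card ?N"
    by (simp add: divide_right_mono)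
  then show ?thesis using QF[OF fN, of k ?g] parseval[OF fN, of ?g] a b by simp
qed

lemma degree:
  assumes "even k" "x \<in> Hverts n"
  shows "(\<Sum>y\<in>Hverts n. Am k x y) = real (n choose k)"
proof -
  have "(\<Sum>y\<in>Hverts n. Am k x y) = (\<Sum>y\<in>Hverts n. Hadj_mat n k x y * chi {} y)"
    by (simp add: mat_eq chi_def)
  also have "\<dots> = Kr {..<n} k {} * chi {} x" by (rule eig_eq_chi[OF assms(1) _ assms(2)]) simp
  also have "\<dots> = real (n choose k)" using Kr_card[of "{}" n k] K_0[of n k] by (simp add: chi_def)
  finally show ?thesis .
qed

lemma card_V: "n > 0 \<Longrightarrow> card (Hverts n) = 2 ^ (n - 1)"
proof -
  assume n: "n > 0"
  have "card (Pow {..<n}) = card (Hverts n) + card (Pow {..<n} - Hverts n)"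
    by (subst card_Un_disjoint[symmetric]) (auto simp: V_eq intro: arg_cong[where f=card])
  moreover have "card (Pow {..<n} - Hverts n) = card (Hverts n)"
  proof -
    have "bij_betw (\<lambda>x. sd {0} x) (Hverts n) (Pow {..<n} - Hverts n)"
    proof (rule bij_betw_byWitness[where f'="\<lambda>x. sd {0} x"])
      show "\<forall>a\<in>Hverts n. sd {0} (sd {0} a) = a" by (simp add: sd_inv)
      show "\<forall>a\<in>Pow {..<n} - Hverts n. sd {0} (sd {0} a) = a" by (simp add: sd_inv)
      have par: "even (card (sd {0} x)) \<longleftrightarrow> \<not> even (card x)" if "x \<subseteq> {..<n}" for x
      proof -
        have "finite x" using that finite_subset by auto
        then have "card (sd {0} x) + 2 * card ({0} \<inter> x) = 1 + card x" using parity[of "{0}" x] by simp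
        then show ?thesis by presburger
      qed
      have sub: "sd {0} x \<subseteq> {..<n}" if "x \<subseteq> {..<n}" for x using that n by (auto simp: sd_def)
      show "(\<lambda>x. sd {0} x) ` Hverts n \<subseteq> Pow {..<n} - Hverts n"
        using par sub by (auto simp: V_eq)
      show "(\<lambda>x. sd {0} x) ` (Pow {..<n} - Hverts n) \<subseteq> Hverts n"
        using par sub by (auto simp: V_eq)
    qed
    then show ?thesis by (simp add: bij_betw_same_card)
  qed
  ultimately have "2 ^ n = 2 * card (Hverts n)" by (simp add: card_Pow)
  then show ?thesis using n by (metis Suc_diff_1 mult_left_cancel power_Suc zero_neq_numeral)
qed



lemma sum_pm:
  assumes "D \<subseteq> {..<n}"
  shows "(\<Sum>i<n. (if i \<in> D then -1 else 1::real)) = real n - 2 * real (card D)"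
proof -
  have "(\<Sum>i<n. (if i \<in> D then -1 else 1::real)) = (\<Sum>i<n. 1 - 2 * (if i \<in> D then 1 else 0))"
    by (rule sum.cong) auto
  also have "\<dots> = real n - 2 * (\<Sum>i<n. (if i \<in> D then 1 else 0))"
    by (simp add: sum_subtractf sum_distrib_left)
  also have "(\<Sum>i<n. (if i \<in> D then 1 else 0::real)) = real (card ({..<n} \<inter> D))"
    by (simp add: sum.If_cases)
  also have "{..<n} \<inter> D = D" using assms by auto
  finally show ?thesis .
qed

lemma upper_coloring:
  assumes "n + 1 \<le> 2 * k" "k \<le> n" "n > 0"
  shows "vector_coloring (Hverts n) (Hadj n k) (2 * real k / (2 * real k - real n)) n
           (\<lambda>x i. (if i \<in> x then -1 else 1) / sqrt (real n))"
  unfolding vector_coloring_def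
proof (intro conjI ballI impI)
  have d: "2 * real k - real n > 0" using assms by simp
  show "2 \<le> 2 * real k / (2 * real k - real n)" using d assms by (simp add: field_simps)
  fix x assume x: "x \<in> Hverts n"
  have "(\<Sum>i<n. ((if i \<in> x then -1 else 1) / sqrt (real n))\<^sup>2) = (\<Sum>i<n. 1 / real n)"
    by (rule sum.cong) (auto simp: power_divide)
  then show "(\<Sum>i<n. ((if i \<in> x then -1 else 1) / sqrt (real n))\<^sup>2) = 1" using assms by simp
  fix y assume y: "y \<in> Hverts n" and adj: "Hadj n k x y"
  have "(\<Sum>i<n. (if i \<in> x then -1 else 1) / sqrt (real n) * ((if i \<in> y then -1 else 1) / sqrt (real n)))
        = (\<Sum>i<n. (if i \<in> sd x y then -1 else 1) / real n)"
    by (rule sum.cong) (auto simp: sd_def)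
  also have "\<dots> = (\<Sum>i<n. (if i \<in> sd x y then -1 else 1)) / real n" by (simp add: sum_divide_distrib)
  also have "\<dots> = (real n - 2 * real k) / real n"
    using sum_pm[of "sd x y" n] adj x y by (simp add: adj_eq sd_sub Hverts_def)
  also have "\<dots> = - 1 / (2 * real k / (2 * real k - real n) - 1)"
    using d assms by (simp add: field_simps)
  finally show "(\<Sum>i<n. (if i \<in> x then -1 else 1) / sqrt (real n) * ((if i \<in> y then -1 else 1) / sqrt (real n)))
        \<le> - 1 / (2 * real k / (2 * real k - real n) - 1)" by simp
qed

lemma lower_bound:
  assumes "even k" "n + 1 \<le> 2 * k" "k \<le> n" "n > 0"
    and vc: "vector_coloring (Hverts n) (Hadj n k) t m p"
  shows "2 * real k / (2 * real k - real n) \<le> t"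
proof -
  let ?V = "Hverts n" and ?l = "real_of_int (K n k 1)"
  have t2: "t \<ge> 2" and unit: "\<And>x. x \<in> ?V \<Longrightarrow> (\<Sum>i<m. (p x i)^2) = 1"
    and edge: "\<And>x y. x \<in> ?V \<Longrightarrow> y \<in> ?V \<Longrightarrow> Hadj n k x y \<Longrightarrow> (\<Sum>i<m. p x i * p y i) \<le> - 1 / (t - 1)"
    using vc unfolding vector_coloring_def by auto
  have k1: "1 \<le> k" using assms by simp
  define c where "c = real ((n - 1) choose (k - 1))"
  have c0: "c > 0" unfolding c_def using assms by simp
  have lam: "?l = (real n - 2 * real k) / real k * c" unfolding c_def using lam_formula(1)[OF k1 assms(3)] .
  have D: "real (n choose k) = real n / real k * c" unfolding c_def using lam_formula(2)[OF k1 assms(3)] .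
  define Q where "Q = (\<Sum>x\<in>?V. \<Sum>y\<in>?V. Am k x y * (\<Sum>i<m. p x i * p y i))"
  have "?l * real (card ?V) = (\<Sum>i<m. ?l * (\<Sum>x\<in>?V. (p x i)^2))"
  proof -
    have "(\<Sum>i<m. ?l * (\<Sum>x\<in>?V. (p x i)^2)) = ?l * (\<Sum>x\<in>?V. \<Sum>i<m. (p x i)^2)"
      by (simp add: sum_distrib_left sum.swap[of _ "{..<m}"])
    also have "\<dots> = ?l * real (card ?V)" by (simp add: unit)
    finally show ?thesis by simp
  qed
  also have "\<dots> \<le> (\<Sum>i<m. \<Sum>x\<in>?V. \<Sum>y\<in>?V. Am k x y * p x i * p y i)"
    by (rule sum_mono) (rule qf_bound[OF assms(1-3)])
  also have "\<dots> = Q" unfolding Q_def sum_distrib_left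
    by (subst sum.swap, rule sum.cong, simp, subst sum.swap, rule sum.cong, simp_all add: mult_ac)
  also have "Q \<le> (\<Sum>x\<in>?V. \<Sum>y\<in>?V. Am k x y * (- 1 / (t - 1)))"
    unfolding Q_def
  proof (rule sum_mono, rule sum_mono)
    fix x y assume "x \<in> ?V" "y \<in> ?V"
    then show "Am k x y * (\<Sum>i<m. p x i * p y i) \<le> Am k x y * (- 1 / (t - 1))"
      using edge[of x y] by (auto simp: Am_def adj_eq)
  qed
  also have "\<dots> = (- 1 / (t - 1)) * (\<Sum>x\<in>?V. \<Sum>y\<in>?V. Am k x y)"
    by (simp add: sum_distrib_left sum_distrib_right mult_ac)
  also have "(\<Sum>x\<in>?V. \<Sum>y\<in>?V. Am k x y) = real (card ?V) * real (n choose k)"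
    by (simp add: degree[OF assms(1)])
  finally have ineq: "?l * real (card ?V) \<le> (- 1 / (t - 1)) * (real (card ?V) * real (n choose k))" .
  have cV: "real (card ?V) > 0" using card_V[OF assms(4)] by simp
  have "?l * real (card ?V) \<le> ((- 1 / (t - 1)) * real (n choose k)) * real (card ?V)"
    using ineq by (simp only: mult_ac)
  then have "?l \<le> (- 1 / (t - 1)) * real (n choose k)" using cV by (rule mult_right_le_imp_le)
  then have "?l * (t - 1) \<le> - real (n choose k)" using t2 by (simp add: field_simps)
  moreover have "?l * (t - 1) = ((real n - 2 * real k) * c * (t - 1)) / real k" unfolding lam by simp
  moreover have "- real (n choose k) = (- (real n * c)) / real k" unfolding D by simp
  ultimately have "((real n - 2 * real k) * c * (t - 1)) / real k \<le> (- (real n * c)) / real k" by simp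
  then have "(real n - 2 * real k) * c * (t - 1) \<le> - (real n * c)"
    using k1 by (simp only: divide_le_cancel)
  then have "c * ((real n - 2 * real k) * (t - 1)) \<le> c * (- real n)" by (simp only: mult_ac)
  then have h1: "(real n - 2 * real k) * (t - 1) \<le> - real n" using c0 by (simp only: mult_le_cancel_left_pos)
  have "(2 * real k - real n) * (t - 1) = - ((real n - 2 * real k) * (t - 1))" by (simp add: algebra_simps)
  then have h2: "real n \<le> (2 * real k - real n) * (t - 1)" using h1 by linarith
  have dpos: "2 * real k - real n > 0" using assms by simp
  have "real n / (2 * real k - real n) \<le> t - 1" using h2 dpos by (simp add: pos_divide_le_eq mult.commute)
  moreover have "2 * real k / (2 * real k - real n) = 1 + real n / (2 * real k - real n)"
    using dpos by (simp add: field_simps)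
  ultimately show ?thesis by simp
qed

lemma chi_v_eq:
  assumes "even k" "n + 1 \<le> 2 * k" "k \<le> n" "n > 0"
  shows "chi_v (Hverts n) (Hadj n k) = 2 * real k / (2 * real k - real n)"
  unfolding chi_v_def
  by (rule cInf_eq_minimum) (use upper_coloring[OF assms(2-4)] lower_bound[OF assms] in blast)+



lemma chi_subset_even: "x \<subseteq> N \<Longrightarrow> chi N x = (-1) ^ card x"
  unfolding chi_def by (simp add: Int_absorb1)

lemma sumV_chi:
  assumes "w \<subseteq> {..<n}" "n > 0"
  shows "(\<Sum>x\<in>Hverts n. chi w x) = 2 ^ (n - 1) * ((if w = {} then 1 else 0) + (if w = {..<n} then 1 else 0))"
proof -
  let ?N = "{..<n::nat}"
  have "(\<Sum>x\<in>Hverts n. chi w x) = (\<Sum>x\<in>Pow ?N. if even (card x) then chi w x else 0)"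
    unfolding V_eq by (rule sum.inter_filter) simp
  also have "\<dots> = (\<Sum>x\<in>Pow ?N. (chi x w + chi x (sd ?N w)) / 2)"
  proof (rule sum.cong, simp)
    fix x assume x: "x \<in> Pow ?N"
    have fx: "finite x" using x finite_subset by auto
    have "chi x (sd ?N w) = chi x ?N * chi x w" using chi_mult[OF fx] by simp
    also have "chi x ?N = (-1) ^ card x" using chi_subset_even[of x ?N] x chi_comm by auto
    finally have e: "chi x (sd ?N w) = (-1) ^ card x * chi w x" by (simp add: chi_comm)
    show "(if even (card x) then chi w x else 0) = (chi x w + chi x (sd ?N w)) / 2"
      unfolding e by (simp add: chi_comm)
  qed
  also have "\<dots> = ((\<Sum>x\<in>Pow ?N. chi x w) + (\<Sum>x\<in>Pow ?N. chi x (sd ?N w))) / 2"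
    by (simp only: sum_divide_distrib[symmetric] sum.distrib)
  also have "\<dots> = ((if w = {} then 2 ^ n else 0) + (if sd ?N w = {} then 2 ^ n else 0)) / 2"
    using sum_chi[of ?N w] sum_chi[of ?N "sd ?N w"] assms sd_sub[of ?N ?N w] by simp
  also have "\<dots> = 2 ^ (n - 1) * ((if w = {} then 1 else 0) + (if w = {..<n} then 1 else 0))"
  proof -
    have p: "(2::real) ^ n = 2 * 2 ^ (n - 1)" using assms by (metis Suc_diff_1 power_Suc)
    show ?thesis unfolding p using sd_empty[of ?N w] by auto
  qed
  finally show ?thesis .
qed

lemma chi_single: "chi {i} x = (if i \<in> x then -1 else 1)"
  unfolding chi_def by auto

lemma span_lemma:
  assumes "even k" "n + 2 \<le> 2 * k" "k + 1 \<le> n"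
    and ev: "is_eigenvector (Hverts n) (Hadj_mat n k) (real_of_int (K n k 1)) f"
    and x: "x \<in> Hverts n"
  shows "2 ^ n * f x = (\<Sum>i<n. (fh {..<n} (ext (Hverts n) f) {i} + fh {..<n} (ext (Hverts n) f) ({..<n} - {i})) * chi {i} x)"
proof -
  let ?N = "{..<n::nat}" and ?g = "ext (Hverts n) f"
  define F where "F S = chi S x * fh ?N ?g S" for S
  have n4: "n \<ge> 4" using assms by simp
  have EF: "\<forall>S\<in>Pow ?N. fh ?N ?g S \<noteq> 0 \<longrightarrow> Kr ?N k S = real_of_int (K n k 1)"
    using eig_fourier[OF assms(1) ev] by blast
  have cc: "card S = 1 \<or> card S = n - 1" if S: "S \<in> Pow ?N" "fh ?N ?g S \<noteq> 0" for S
  proof (rule ccontr)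
    assume h: "\<not> (card S = 1 \<or> card S = n - 1)"
    have "card S \<le> n" using S card_mono[of ?N S] by auto
    then have "K n k 1 < K n k (card S)" using K_strict[OF assms(1-3)] h by simp
    moreover have "K n k (card S) = K n k 1" using EF S Kr_card[of S n k] by simp
    ultimately show False by simp
  qed
  define A1 where "A1 = (\<lambda>i. {i}) ` ?N"
  define A2 where "A2 = (\<lambda>i. ?N - {i}) ` ?N"
  have xN: "x \<in> Pow ?N" using x by (auto simp: V_eq)
  have "2 ^ n * f x = (\<Sum>S\<in>Pow ?N. F S)"
    using inversion[of ?N x ?g] xN x unfolding F_def ext_def by simp
  also have "\<dots> = (\<Sum>S\<in>A1 \<union> A2. F S)"
  proof (rule sum.mono_neutral_right)
    show "finite (Pow ?N)" by simp
    show "A1 \<union> A2 \<subseteq> Pow ?N" unfolding A1_def A2_def by auto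
    show "\<forall>S\<in>Pow ?N - (A1 \<union> A2). F S = 0"
    proof
      fix S assume S: "S \<in> Pow ?N - (A1 \<union> A2)"
      show "F S = 0"
      proof (rule ccontr)
        assume "F S \<noteq> 0"
        then have fz: "fh ?N ?g S \<noteq> 0" unfolding F_def by auto
        have SN: "S \<subseteq> ?N" using S by auto
        show False
        proof (cases "card S = 1")
          case True
          then obtain a where "S = {a}" by (auto simp: card_Suc_eq)
          then show False using S unfolding A1_def by auto
        next
          case False
          then have "card S = n - 1" using cc[of S] S fz by auto
          then have "card (?N - S) = 1" using SN n4 by (simp add: card_Diff_subset finite_subset)
          then obtain a where a: "?N - S = {a}" by (auto simp: card_Suc_eq)
          then have "S = ?N - {a}" "a \<in> ?N" using SN by auto
          then show False using S unfolding A2_def by auto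
        qed
      qed
    qed
  qed
  also have "\<dots> = (\<Sum>S\<in>A1. F S) + (\<Sum>S\<in>A2. F S)"
  proof (rule sum.union_disjoint)
    show "finite A1" "finite A2" unfolding A1_def A2_def by auto
    show "A1 \<inter> A2 = {}"
    proof (rule ccontr)
      assume "A1 \<inter> A2 \<noteq> {}"
      then obtain i j where ij: "i \<in> ?N" "j \<in> ?N" "{i} = ?N - {j}" unfolding A1_def A2_def by auto
      then have "card (?N - {j}) = 1" by (metis card.empty card_insert_disjoint empty_iff finite.emptyI One_nat_def)
      moreover have "card (?N - {j}) = n - 1" using ij by simp
      ultimately show False using n4 by simp
    qed
  qed
  also have "(\<Sum>S\<in>A1. F S) = (\<Sum>i\<in>?N. F {i})"
    unfolding A1_def by (rule sum.reindex[unfolded comp_def]) (auto intro: inj_onI)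
  also have "(\<Sum>S\<in>A2. F S) = (\<Sum>i\<in>?N. F (?N - {i}))"
    unfolding A2_def by (rule sum.reindex[unfolded comp_def]) (auto intro!: inj_onI)
  also have "(\<Sum>i\<in>?N. F (?N - {i})) = (\<Sum>i\<in>?N. chi {i} x * fh ?N ?g (?N - {i}))"
  proof (rule sum.cong, simp)
    fix i assume i: "i \<in> ?N"
    have ev2: "even (card (x \<inter> ?N))" using x by (auto simp: V_eq Int_absorb2)
    have "chi (?N - {i}) x = chi {i} x" using chi_compl[of ?N "{i}" x] i ev2 by simp
    then show "F (?N - {i}) = chi {i} x * fh ?N ?g (?N - {i})" unfolding F_def by simp
  qed
  finally show ?thesis unfolding F_def by (simp add: sum.distrib[symmetric] algebra_simps)
qed



lemma canonical:
  assumes "even k" "real n / 2 + 1 \<le> real k" "k + 1 \<le> n" "n > 0"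
  shows "canonical_vector_coloring (Hverts n) (Hadj_mat n k) n
              (\<lambda>x i. (if i \<in> x then -1 else 1) / sqrt (real n))"
proof -
  let ?N = "{..<n::nat}" and ?V = "Hverts n"
  have k2: "n + 2 \<le> 2 * k" using assms(2) by linarith
  have lm: "lambda_min ?V (Hadj_mat n k) = real_of_int (K n k 1)"
    using lambda_min_eq[OF assms(1) _ _ assms(4)] k2 assms(3) by simp
  define a :: real where "a = 2 ^ (n - 1)"
  have a0: "a > 0" unfolding a_def by simp
  have sa: "sqrt a > 0" using a0 by simp
  have cardV: "real (card ?V) = a" unfolding a_def using card_V[OF assms(4)] by simp
  define q where "q i x = chi {i} x / sqrt a" for i x
  show ?thesis unfolding canonical_vector_coloring_def lm
  proof (rule exI[of _ q], intro conjI allI impI ballI)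
    fix i assume i: "i < n"
    have s: "{i} \<subseteq> ?N" using i by auto
    show "is_eigenvector ?V (Hadj_mat n k) (real_of_int (K n k 1)) (q i)"
      unfolding is_eigenvector_def
    proof
      show "\<exists>x\<in>?V. q i x \<noteq> 0" using empty_V sa by (auto simp: q_def chi_def intro!: bexI[of _ "{}"])
      show "\<forall>x\<in>?V. (\<Sum>y\<in>?V. Hadj_mat n k x y * q i y) = real_of_int (K n k 1) * q i x"
      proof
        fix x assume x: "x \<in> ?V"
        have "(\<Sum>y\<in>?V. Hadj_mat n k x y * q i y) = (\<Sum>y\<in>?V. Hadj_mat n k x y * chi {i} y) / sqrt a"
          unfolding q_def by (simp add: sum_divide_distrib)
        also have "\<dots> = Kr ?N k {i} * chi {i} x / sqrt a" using eig_eq_chi[OF assms(1) s x] by simp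
        finally show "(\<Sum>y\<in>?V. Hadj_mat n k x y * q i y) = real_of_int (K n k 1) * q i x"
          using Kr_card[OF s, of k] unfolding q_def by simp
      qed
    qed
  next
    fix i j assume i: "i < n" and j: "j < n"
    have w: "sd {i} {j} \<subseteq> ?N" using i j by (auto simp: sd_def)
    have "(\<Sum>x\<in>?V. q i x * q j x) = (\<Sum>x\<in>?V. chi (sd {i} {j}) x) / a"
    proof -
      have "(\<Sum>x\<in>?V. q i x * q j x) = (\<Sum>x\<in>?V. chi (sd {i} {j}) x / a)"
      proof (rule sum.cong, simp)
        fix x assume x: "x \<in> ?V"
        have fx: "finite x" using x by (auto simp: V_eq intro: finite_subset)
        have "chi {i} x * chi {j} x = chi (sd {i} {j}) x"
          using chi_mult[OF fx, of "{i}" "{j}"] by (simp add: chi_comm)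
        then show "q i x * q j x = chi (sd {i} {j}) x / a"
          unfolding q_def using a0 by (simp add: field_simps)
      qed
      then show ?thesis by (simp add: sum_divide_distrib)
    qed
    also have "\<dots> = (if i = j then 1 else 0)"
    proof -
      have ne: "sd {i} {j} \<noteq> ?N"
      proof
        assume h: "sd {i} {j} = ?N"
        have "card (sd {i} {j}) \<le> 2" unfolding sd_def by (rule order_trans[OF card_mono[of "{i,j}"]]) (auto simp: card_insert_if)
        then show False using h k2 assms(3) by simp
      qed
      show ?thesis using sumV_chi[OF w assms(4)] ne sd_empty[of "{i}" "{j}"] a0 unfolding a_def by auto
    qed
    finally show "(\<Sum>x\<in>?V. q i x * q j x) = (if i = j then 1 else 0)" .
  next
    fix f assume ev: "is_eigenvector ?V (Hadj_mat n k) (real_of_int (K n k 1)) f"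
    let ?g = "ext ?V f"
    define c where "c i = (fh ?N ?g {i} + fh ?N ?g (?N - {i})) * sqrt a / 2 ^ n" for i
    show "\<exists>c. \<forall>x\<in>?V. f x = (\<Sum>i<n. c i * q i x)"
    proof (rule exI[of _ c], rule ballI)
      fix x assume x: "x \<in> ?V"
      have "2 ^ n * f x = (\<Sum>i<n. (fh ?N ?g {i} + fh ?N ?g (?N - {i})) * chi {i} x)"
        using span_lemma[OF assms(1) k2 assms(3) ev x] .
      also have "\<dots> = 2 ^ n * (\<Sum>i<n. c i * q i x)"
        unfolding c_def q_def sum_distrib_left using sa by (intro sum.cong) (simp_all add: field_simps)
      finally show "f x = (\<Sum>i<n. c i * q i x)" by simp
    qed
  next
    fix x i assume x: "x \<in> ?V" and i: "i < n"
    have "sqrt (real (card ?V) / real n) * q i x = sqrt a / sqrt (real n) * (chi {i} x / sqrt a)"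
      unfolding cardV q_def by (simp add: real_sqrt_divide)
    also have "\<dots> = (if i \<in> x then -1 else 1) / sqrt (real n)" using sa by (simp add: chi_single)
    finally show "(if i \<in> x then -1 else 1) / sqrt (real n) = sqrt (real (card ?V) / real n) * q i x" by simp
  qed
qed

theorem lemma3p6:
  fixes n k :: nat
  assumes "n > 0"
  shows "(even k \<and> real n + 1 \<le> 2 * real k \<and> k \<le> n \<longrightarrow>
            lambda_min (Hverts n) (Hadj_mat n k)
              = (real n - 2 * real k) / real k * real ((n - 1) choose (k - 1))
          \<and> chi_v (Hverts n) (Hadj n k) = 2 * real k / (2 * real k - real n))
       \<and> (even k \<and> real n / 2 + 1 \<le> real k \<and> k + 1 \<le> n \<longrightarrow>
            canonical_vector_coloring (Hverts n) (Hadj_mat n k) n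
              (\<lambda>x i. (if i \<in> x then -1 else 1) / sqrt (real n)))"
proof (intro conjI impI)
  assume h: "even k \<and> real n + 1 \<le> 2 * real k \<and> k \<le> n"
  then have h': "even k" "n + 1 \<le> 2 * k" "k \<le> n" by linarith+
  have k1: "1 \<le> k" using h' by simp
  show "lambda_min (Hverts n) (Hadj_mat n k) = (real n - 2 * real k) / real k * real ((n - 1) choose (k - 1))"
    using lambda_min_eq[OF h' assms] lam_formula(1)[OF k1 h'(3)] by simp
  show "chi_v (Hverts n) (Hadj n k) = 2 * real k / (2 * real k - real n)"
    using chi_v_eq[OF h' assms] .
next
  assume h: "even k \<and> real n / 2 + 1 \<le> real k \<and> k + 1 \<le> n"
  then show "canonical_vector_coloring (Hverts n) (Hadj_mat n k) n (\<lambda>x i. (if i \<in> x then -1 else 1) / sqrt (real n))"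
    using canonical[OF _ _ _ assms] by blast
qed

end
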